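(* Consider the nonlinear kinetic equation with transverse scattering described in the context, and a maximally extended local solution on $[0,z_* )$ satisfying the standing assumptions. Assume $g<0$ (hence $H\ge0$). Then for all $z\in[0,z_* )$, $$V_x(0)+2V_{xp}(0)z+(d\sigma\wedge2)[H-\bar H]z^2\le V_x(z)\le V_x(0)+2V_{xp}(0)z+(d\sigma\vee2)[H-\bar H]z^2,$$ where $a\vee b=\max(a,b)$ and $a\wedge b=\min(a,b)$.
   Context: Setting. Let $d\ge1$, $\sigma>0$, $g\in\mathbb R$. Let $\Phi(w,\mathbf p)\ge0$, $(w,\mathbf p)\in\mathbb R\times\mathbb R^d$, be a power spectrum density, rapidly decaying, with $\Phi(w,\mathbf p)=\Phi(-w,\mathbf p)=\Phi(w,-\mathbf p)=\Phi(-w,-\mathbf p)$. The transverse scattering operator $\mathcal L$ is either the linear Boltzmann operator $\mathcal L W(\mathbf p)=2\pi\int\delta\big(\tfrac{|\mathbf q|^2-|\mathbf p|^2}{2}\big)\big[\int\Phi(w,\mathbf q-\mathbf p)dw\big][W(\mathbf q)-W(\mathbf p)]d\mathbf q$, or the Fokker–Planck operator $\mathcal LW=\nabla_{\mathbf p}\cdot(\mathbf D(\mathbf p)\nabla_{\mathbf p}W)$ with $\mathbf D(\mathbf p)=\pi|\mathbf p|^{-1}\int_{\mathbf p\cdot\mathbf p_\perp=0}\int\Phi(w,\mathbf p_\perp)dw\,\mathbf p_\perp\otimes\mathbf p_\perp\,d\mathbf p_\perp$. The kinetic equation is $\partial_zW+\mathbf p\cdot\nabla_{\mathbf x}W+\nabla_{\mathbf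 x}U\cdot\nabla_{\mathbf p}W=\mathcal LW$ for $W(z,\mathbf x,\mathbf p)\ge0$, $\mathbf x,\mathbf p\in\mathbb R^d$, with $\rho(z,\mathbf x)=\int W\,d\mathbf p$ and $U=g\rho^{\sigma}$, understood weakly: $\partial_z\int\Theta W-\int\mathbf p\cdot\nabla_{\mathbf x}\Theta\,W-\int\nabla_{\mathbf x}U\cdot\nabla_{\mathbf p}\Theta\,W-\int(\mathcal L^*\Theta)W=0$ for smooth rapidly decaying $\Theta$. Normalization $\int W\,d\mathbf x\,d\mathbf p=1$. Notation (all integrals over $\mathbb R^{2d}$ against $W(z,\cdot)$): $\bar{\mathbf x}=\int\mathbf xW$, $\bar{\mathbf p}=\int\mathbf pW$, $V_x=\int|\mathbf x-\bar{\mathbf x}|^2W$, $V_p=\int|\mathbf p-\bar{\mathbf p}|^2W$, $V_{xp}=\int(\mathbf x-\bar{\mathbf x})\cdot(\mathbf p-\bar{\mathbf p})W$, Hamiltonian $H=\frac12\int|\mathbf p|^2W-\frac{g}{\sigma+1}\int\rho^{\sigma+1}d\mathbf x$, mean Hamiltonian $\bar H=\frac12|\bar{\mathbf p}|^2$ (both constant in $z$ in this setting). Standing assumptions: a local solution exists in the space of nonnegative measures with square-integrable density, finite Dirichlet form $-\int W\mathcal LW$, finite positive variances $V_x,V_p$ and finite Hamiltonian; $[0,z_* )$ is the maximal interval of existence of this solution; on $[0,z_* )$ the weak formulation may be applied with the test functions $x_i,p_i,|\mathbf x|^2,\mathbf x\cdot\mathbf p,|\mathbf p|^2$ (so the energy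 law and variance identity hold); and $W$ has mixed-state (Wigner measure) structure, so $V_{xp}^2\le V_xV_p$. *)

theory Defs
  imports "HOL-Analysis.Analysis"
begin

text \<open>Phase-space densities: a phase point is a pair (x, p) with x, p in R^d,
  R^d rendered as real^'d (d = CARD('d)).\<close>

type_synonym 'd phase = "(real^'d) \<times> (real^'d)"

definition rho :: "('d::finite phase \<Rightarrow> real) \<Rightarrow> real^'d \<Rightarrow> real" where
  "rho w x = (LINT p|lborel. w (x, p))"

definition xbar :: "('d::finite phase \<Rightarrow> real) \<Rightarrow> real^'d" where
  "xbar w = (LINT v|lborel. w v *\<^sub>R fst v)"

definition pbar :: "('d::finite phase \<Rightarrow> real) \<Rightarrow> real^'d" where
  "pbar w = (LINT v|lborel. w v *\<^sub>R snd v)"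

definition Vx :: "('d::finite phase \<Rightarrow> real) \<Rightarrow> real" where
  "Vx w = (LINT v|lborel. (norm (fst v - xbar w))\<^sup>2 * w v)"

definition Vp :: "('d::finite phase \<Rightarrow> real) \<Rightarrow> real" where
  "Vp w = (LINT v|lborel. (norm (snd v - pbar w))\<^sup>2 * w v)"

definition Vxp :: "('d::finite phase \<Rightarrow> real) \<Rightarrow> real" where
  "Vxp w = (LINT v|lborel. ((fst v - xbar w) \<bullet> (snd v - pbar w)) * w v)"

definition Pot :: "real \<Rightarrow> real \<Rightarrow> ('d::finite phase \<Rightarrow> real) \<Rightarrow> real" where
  "Pot g \<sigma> w = - g / (\<sigma> + 1) * (LINT x|lborel. (rho w x) powr (\<sigma> + 1))"

definition Ham :: "real \<Rightarrow> real \<Rightarrow> ('d::finite phase \<Rightarrow> real) \<Rightarrow> real" where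
  "Ham g \<sigma> w = (LINT v|lborel. (norm (snd v))\<^sup>2 * w v) / 2 + Pot g \<sigma> w"

definition Hbar :: "('d::finite phase \<Rightarrow> real) \<Rightarrow> real" where
  "Hbar w = (norm (pbar w))\<^sup>2 / 2"

end

theory Submission
  imports Defs
begin


lemma mono_I:
  fixes h h' :: "real \<Rightarrow> real" and zs :: ereal
  assumes I: "I = {z::real. 0 \<le> z \<and> ereal z < zs}"
    and d: "\<forall>x\<in>I. (h has_real_derivative h' x) (at x within I)"
    and nn: "\<forall>x\<in>I. h' x \<ge> 0" and z: "z \<in> I"
  shows "h 0 \<le> h z"
proof (rule DERIV_nonneg_imp_increasing_open[where f=h and a=0 and b=z])
  show "0 \<le> z" using z I by auto
  have sub: "{0..z} \<subseteq> I"
  proof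
    fix x assume "x \<in> {0..z}"
    then have "0 \<le> x" "ereal x \<le> ereal z" by auto
    moreover have "ereal z < zs" using z I by auto
    ultimately have "ereal x < zs" using le_less_trans by blast
    then show "x \<in> I" using I \<open>0 \<le> x\<close> by auto
  qed
  show "continuous_on {0..z} h"
  proof -
    have "continuous_on I h"
      using d by (meson DERIV_continuous continuous_on_eq_continuous_within)
    then show ?thesis using sub continuous_on_subset by blast
  qed
  fix x assume x: "0 < x" "x < z"
  have xI: "x \<in> I" using x sub by auto
  have "at x within I = at x"
    by (rule at_within_open_subset[where S="{0<..<z}"]) (use x sub in auto)
  then show "\<exists>y. (h has_real_derivative y) (at x) \<and> 0 \<le> y"
    using d nn xI by metis
qed

lemma ode_lower:
  fixes F G D :: "real \<Rightarrow> real" and zs :: ereal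
  assumes I: "I = {z::real. 0 \<le> z \<and> ereal z < zs}"
    and dF: "\<forall>x\<in>I. (F has_real_derivative 2 * G x) (at x within I)"
    and dG: "\<forall>x\<in>I. (G has_real_derivative D x) (at x within I)"
    and lo: "\<forall>x\<in>I. a \<le> D x" and z: "z \<in> I" and zero: "0 \<in> I"
  shows "F 0 + 2 * G 0 * z + a * z\<^sup>2 \<le> F z"
proof -
  have k: "G 0 \<le> G x - a * x" if "x \<in> I" for x
  proof -
    have "(\<lambda>t. G t - a * t) 0 \<le> (\<lambda>t. G t - a * t) x"
    proof (rule mono_I[OF I, where h'="\<lambda>t. D t - a"])
      show "\<forall>x\<in>I. ((\<lambda>t. G t - a * t) has_real_derivative D x - a) (at x within I)"
        using dG by (auto intro!: derivative_eq_intros)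
    qed (use lo that in auto)
    then show ?thesis by simp
  qed
  have "(\<lambda>t. F t - 2 * G 0 * t - a * t\<^sup>2) 0 \<le> (\<lambda>t. F t - 2 * G 0 * t - a * t\<^sup>2) z"
  proof (rule mono_I[OF I, where h'="\<lambda>t. 2 * G t - 2 * G 0 - 2 * a * t"])
    show "\<forall>x\<in>I. ((\<lambda>t. F t - 2 * G 0 * t - a * t\<^sup>2) has_real_derivative 2 * G x - 2 * G 0 - 2 * a * x) (at x within I)"
      using dF by (auto intro!: derivative_eq_intros)
  qed (use z in \<open>auto dest: k\<close>)
  then show ?thesis by simp
qed



lemma integrable_scaleR_vec:
  fixes f :: "'a \<Rightarrow> 'b::euclidean_space" and w :: "'a \<Rightarrow> real"
  assumes w: "integrable M w" and nn: "\<forall>v. w v \<ge> 0"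
    and fm: "f \<in> borel_measurable M"
    and ff: "integrable M (\<lambda>v. (norm (f v))\<^sup>2 * w v)"
  shows "integrable M (\<lambda>v. w v *\<^sub>R f v)"
proof (rule Bochner_Integration.integrable_bound[where f="\<lambda>v. w v + (norm (f v))\<^sup>2 * w v"])
  show "integrable M (\<lambda>v. w v + (norm (f v))\<^sup>2 * w v)" using w ff by auto
  show "(\<lambda>v. w v *\<^sub>R f v) \<in> borel_measurable M"
    using w fm by (intro borel_measurable_scaleR) auto
  show "AE x in M. norm (w x *\<^sub>R f x) \<le> norm (w x + (norm (f x))\<^sup>2 * w x)"
  proof (rule AE_I2)
    fix x
    have a: "norm (f x) \<le> 1 + (norm (f x))\<^sup>2"
    proof -
      have "0 \<le> (norm (f x) - 1)\<^sup>2" by simp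
      then have "0 \<le> norm (f x) * norm (f x) - 2 * norm (f x) + 1"
        by (simp add: power2_eq_square algebra_simps)
      moreover have "0 \<le> norm (f x) * norm (f x)" by simp
      ultimately show ?thesis unfolding power2_eq_square by linarith
    qed
    have "norm (w x *\<^sub>R f x) = w x * norm (f x)" using nn by simp
    also have "\<dots> \<le> w x * (1 + (norm (f x))\<^sup>2)" using nn a by (simp add: mult_left_mono)
    also have "\<dots> = norm (w x + (norm (f x))\<^sup>2 * w x)" using nn by (simp add: algebra_simps)
    finally show "norm (w x *\<^sub>R f x) \<le> norm (w x + (norm (f x))\<^sup>2 * w x)" .
  qed
qed

lemma integrable_inner_w:
  fixes f g :: "'a \<Rightarrow> 'b::euclidean_space" and w :: "'a \<Rightarrow> real"
  assumes w: "integrable M w" and nn: "\<forall>v. w v \<ge> 0"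
    and fm: "f \<in> borel_measurable M" and gm: "g \<in> borel_measurable M"
    and ff: "integrable M (\<lambda>v. (norm (f v))\<^sup>2 * w v)"
    and gg: "integrable M (\<lambda>v. (norm (g v))\<^sup>2 * w v)"
  shows "integrable M (\<lambda>v. (f v \<bullet> g v) * w v)"
proof (rule Bochner_Integration.integrable_bound[where f="\<lambda>v. (norm (f v))\<^sup>2 * w v + (norm (g v))\<^sup>2 * w v"])
  show "integrable M (\<lambda>v. (norm (f v))\<^sup>2 * w v + (norm (g v))\<^sup>2 * w v)" using ff gg by auto
  show "(\<lambda>v. (f v \<bullet> g v) * w v) \<in> borel_measurable M"
    using w fm gm by (intro borel_measurable_times borel_measurable_inner) auto
  show "AE x in M. norm ((f x \<bullet> g x) * w x) \<le> norm ((norm (f x))\<^sup>2 * w x + (norm (g x))\<^sup>2 * w x)"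
  proof (rule AE_I2)
    fix x
    have a: "\<bar>f x \<bullet> g x\<bar> \<le> (norm (f x))\<^sup>2 + (norm (g x))\<^sup>2"
    proof -
      have "\<bar>f x \<bullet> g x\<bar> \<le> norm (f x) * norm (g x)" by (rule Cauchy_Schwarz_ineq2)
      also have "\<dots> \<le> (norm (f x))\<^sup>2 + (norm (g x))\<^sup>2"
      proof -
        have "0 \<le> (norm (f x) - norm (g x))\<^sup>2" by simp
        then have "0 \<le> norm (f x) * norm (f x) - 2 * (norm (f x) * norm (g x)) + norm (g x) * norm (g x)"
          by (simp add: power2_eq_square algebra_simps)
        moreover have "0 \<le> norm (f x) * norm (f x)" "0 \<le> norm (g x) * norm (g x)" by simp_all
        ultimately show ?thesis unfolding power2_eq_square by linarith
      qed
      finally show ?thesis .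
    qed
    have "norm ((f x \<bullet> g x) * w x) = \<bar>f x \<bullet> g x\<bar> * w x" using nn by (simp add: abs_mult)
    also have "\<dots> \<le> ((norm (f x))\<^sup>2 + (norm (g x))\<^sup>2) * w x" using nn a by (simp add: mult_right_mono)
    also have "\<dots> = norm ((norm (f x))\<^sup>2 * w x + (norm (g x))\<^sup>2 * w x)" using nn by (simp add: algebra_simps)
    finally show "norm ((f x \<bullet> g x) * w x) \<le> norm ((norm (f x))\<^sup>2 * w x + (norm (g x))\<^sup>2 * w x)" .
  qed
qed

lemma center_inner:
  fixes f g :: "'a \<Rightarrow> 'b::euclidean_space" and w :: "'a \<Rightarrow> real"
  assumes w: "integrable M w" and nn: "\<forall>v. w v \<ge> 0" and one: "(LINT v|M. w v) = 1"
    and fm: "f \<in> borel_measurable M" and gm: "g \<in> borel_measurable M"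
    and ff: "integrable M (\<lambda>v. (norm (f v))\<^sup>2 * w v)"
    and gg: "integrable M (\<lambda>v. (norm (g v))\<^sup>2 * w v)"
  shows "(LINT v|M. ((f v - (LINT u|M. w u *\<^sub>R f u)) \<bullet> (g v - (LINT u|M. w u *\<^sub>R g u))) * w v)
       = (LINT v|M. (f v \<bullet> g v) * w v) - (LINT u|M. w u *\<^sub>R f u) \<bullet> (LINT u|M. w u *\<^sub>R g u)"
proof -
  define c where "c = (LINT u|M. w u *\<^sub>R f u)"
  define e where "e = (LINT u|M. w u *\<^sub>R g u)"
  have wf: "integrable M (\<lambda>v. w v *\<^sub>R f v)" by (rule integrable_scaleR_vec[OF w nn fm ff])
  have wg: "integrable M (\<lambda>v. w v *\<^sub>R g v)" by (rule integrable_scaleR_vec[OF w nn gm gg])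
  have fg: "integrable M (\<lambda>v. (f v \<bullet> g v) * w v)" by (rule integrable_inner_w[OF w nn fm gm ff gg])
  have eq: "(\<lambda>v. ((f v - c) \<bullet> (g v - e)) * w v) =
     (\<lambda>v. ((f v \<bullet> g v) * w v - c \<bullet> (w v *\<^sub>R g v)) - ((w v *\<^sub>R f v) \<bullet> e - (c \<bullet> e) * w v))"
    by (auto simp: algebra_simps inner_diff_left inner_diff_right)
  have i1: "integrable M (\<lambda>v. c \<bullet> (w v *\<^sub>R g v))"
    by (rule Bochner_Integration.integrable_inner_right) (rule wg)
  have i2: "integrable M (\<lambda>v. (w v *\<^sub>R f v) \<bullet> e)"
    by (rule Bochner_Integration.integrable_inner_left) (rule wf)
  have i3: "integrable M (\<lambda>v. (c \<bullet> e) * w v)" using w by (rule integrable_mult_right)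
  have j1: "(LINT v|M. c \<bullet> (w v *\<^sub>R g v)) = c \<bullet> e"
    unfolding e_def by (rule integral_inner_right) (rule wg)
  have j2: "(LINT v|M. (w v *\<^sub>R f v) \<bullet> e) = c \<bullet> e"
    unfolding c_def by (rule integral_inner_left) (rule wf)
  have j3: "(LINT v|M. (c \<bullet> e) * w v) = c \<bullet> e"
    using one by simp
  have "(LINT v|M. ((f v - c) \<bullet> (g v - e)) * w v)
      = (LINT v|M. (f v \<bullet> g v) * w v) - (LINT v|M. c \<bullet> (w v *\<^sub>R g v))
        - ((LINT v|M. (w v *\<^sub>R f v) \<bullet> e) - (LINT v|M. (c \<bullet> e) * w v))"
    unfolding eq
    by (simp only: Bochner_Integration.integral_diff Bochner_Integration.integrable_diff fg i1 i2 i3)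
  then show ?thesis unfolding j1 j2 j3 c_def[symmetric] e_def[symmetric] by simp
qed

lemma comp_int:
  fixes f :: "'a \<Rightarrow> real^'d" and w :: "'a \<Rightarrow> real"
  assumes "integrable M (\<lambda>v. w v *\<^sub>R f v)"
  shows "(LINT u|M. w u *\<^sub>R f u) $ i = (LINT v|M. f v $ i * w v)"
proof -
  have "(LINT u|M. w u *\<^sub>R f u) $ i = (LINT u|M. w u *\<^sub>R f u) \<bullet> axis i 1"
    by (rule cart_eq_inner_axis)
  also have "\<dots> = (LINT u|M. (w u *\<^sub>R f u) \<bullet> axis i 1)"
    by (rule integral_inner_left[symmetric]) (rule assms)
  also have "\<dots> = (LINT v|M. f v $ i * w v)"
    by (rule Bochner_Integration.integral_cong) (auto simp: cart_eq_inner_axis[symmetric])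
  finally show ?thesis .
qed

lemma meas_fst: "(fst :: (real^'d) \<times> (real^'d) \<Rightarrow> real^'d) \<in> borel_measurable lborel"
  by (simp add: measurable_lborel1 borel_measurable_continuous_onI continuous_on_fst)

lemma meas_snd: "(snd :: (real^'d) \<times> (real^'d) \<Rightarrow> real^'d) \<in> borel_measurable lborel"
  by (simp add: borel_measurable_continuous_onI continuous_on_snd)


theorem corollary2:
  fixes W :: "real \<Rightarrow> 'd::finite phase \<Rightarrow> real"
    and g \<sigma> :: real and zs :: ereal
  defines "I \<equiv> {z::real. 0 \<le> z \<and> ereal z < zs}"
  assumes sigma_pos: "\<sigma> > 0"
    and g_neg: "g < 0"
    and zs_pos: "zs > 0"
    and nonneg: "\<forall>z\<in>I. \<forall>v. W z v \<ge> 0"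
    and int_W: "\<forall>z\<in>I. integrable lborel (W z)"
    and int_W2: "\<forall>z\<in>I. integrable lborel (\<lambda>v. (W z v)\<^sup>2)"
    and int_xx: "\<forall>z\<in>I. integrable lborel (\<lambda>v. (norm (fst v))\<^sup>2 * W z v)"
    and int_pp: "\<forall>z\<in>I. integrable lborel (\<lambda>v. (norm (snd v))\<^sup>2 * W z v)"
    and int_rho: "\<forall>z\<in>I. integrable lborel (\<lambda>x. (rho (W z) x) powr (\<sigma> + 1))"
    and normalized: "\<forall>z\<in>I. (LINT v|lborel. W z v) = 1"
    and Vx_pos: "\<forall>z\<in>I. Vx (W z) > 0"
    and Vp_pos: "\<forall>z\<in>I. Vp (W z) > 0"
    and mixed_state: "\<forall>z\<in>I. (Vxp (W z))\<^sup>2 \<le> Vx (W z) * Vp (W z)"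
    and weak_x: "\<forall>z\<in>I. \<forall>i. ((\<lambda>t. LINT v|lborel. fst v $ i * W t v)
                  has_real_derivative (LINT v|lborel. snd v $ i * W z v)) (at z within I)"
    and weak_xx: "\<forall>z\<in>I. ((\<lambda>t. LINT v|lborel. (norm (fst v))\<^sup>2 * W t v)
                  has_real_derivative 2 * (LINT v|lborel. (fst v \<bullet> snd v) * W z v)) (at z within I)"
    and variance_identity: "\<forall>z\<in>I. ((\<lambda>t. Vxp (W t))
                  has_real_derivative Vp (W z) + real CARD('d) * \<sigma> * Pot g \<sigma> (W z)) (at z within I)"
    and energy_law: "\<forall>z\<in>I. Ham g \<sigma> (W z) = Ham g \<sigma> (W 0)"
    and mean_ham_const: "\<forall>z\<in>I. Hbar (W z) = Hbar (W 0)"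
  shows "\<forall>z\<in>I.
     Vx (W 0) + 2 * Vxp (W 0) * z
       + min (real CARD('d) * \<sigma>) 2 * (Ham g \<sigma> (W 0) - Hbar (W 0)) * z\<^sup>2 \<le> Vx (W z)
   \<and> Vx (W z) \<le> Vx (W 0) + 2 * Vxp (W 0) * z
       + max (real CARD('d) * \<sigma>) 2 * (Ham g \<sigma> (W 0) - Hbar (W 0)) * z\<^sup>2"
proof -
  have Ieq: "I = {z::real. 0 \<le> z \<and> ereal z < zs}" by (simp add: I_def)
  have zeroI: "0 \<in> I" using zs_pos unfolding I_def by (simp add: zero_ereal_def)
  define A where "A t = (LINT v|lborel. (norm (fst v))\<^sup>2 * W t v)" for t
  define B where "B t = (LINT v|lborel. (fst v \<bullet> snd v) * W t v)" for t
  define X where "X i t = (LINT v|lborel. fst v $ i * W t v)" for i t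
  define P where "P i t = (LINT v|lborel. snd v $ i * W t v)" for i t
  have mf: "(fst :: 'd phase \<Rightarrow> real^'d) \<in> borel_measurable lborel" by (rule meas_fst)
  have ms: "(snd :: 'd phase \<Rightarrow> real^'d) \<in> borel_measurable lborel" by (rule meas_snd)
  have sq: "(norm (y::real^'d))\<^sup>2 = (\<Sum>i\<in>UNIV. (y $ i)\<^sup>2)" for y
    unfolding power2_norm_eq_inner inner_vec_def by (simp add: power2_eq_square)
  have ip: "(y::real^'d) \<bullet> u = (\<Sum>i\<in>UNIV. y $ i * u $ i)" for y u
    by (simp add: inner_vec_def)
  have key: "Vx (W t) = A t - (\<Sum>i\<in>UNIV. (X i t)\<^sup>2)
     \<and> Vxp (W t) = B t - (\<Sum>i\<in>UNIV. X i t * P i t)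
     \<and> Vp (W t) = 2 * Ham g \<sigma> (W t) - 2 * Pot g \<sigma> (W t) - 2 * Hbar (W t)" if t: "t \<in> I" for t
  proof -
    have w: "integrable lborel (W t)" using int_W t by auto
    have nn: "\<forall>v. W t v \<ge> 0" using nonneg t by auto
    have one: "(LINT v|lborel. W t v) = 1" using normalized t by auto
    have ff: "integrable lborel (\<lambda>v. (norm (fst v))\<^sup>2 * W t v)" using int_xx t by auto
    have gg: "integrable lborel (\<lambda>v. (norm (snd v))\<^sup>2 * W t v)" using int_pp t by auto
    have xc: "xbar (W t) $ i = X i t" for i
      unfolding xbar_def X_def by (rule comp_int, rule integrable_scaleR_vec[OF w nn mf ff])
    have pc: "pbar (W t) $ i = P i t" for i
      unfolding pbar_def P_def by (rule comp_int, rule integrable_scaleR_vec[OF w nn ms gg])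
    have c1: "Vx (W t) = A t - (norm (xbar (W t)))\<^sup>2"
      using center_inner[OF w nn one mf mf ff ff]
      unfolding Vx_def A_def xbar_def by (simp add: power2_norm_eq_inner)
    have c2: "Vxp (W t) = B t - xbar (W t) \<bullet> pbar (W t)"
      using center_inner[OF w nn one mf ms ff gg]
      unfolding Vxp_def B_def xbar_def pbar_def by simp
    have c3: "Vp (W t) = (LINT v|lborel. (norm (snd v))\<^sup>2 * W t v) - (norm (pbar (W t)))\<^sup>2"
      using center_inner[OF w nn one ms ms gg gg]
      unfolding Vp_def pbar_def by (simp add: power2_norm_eq_inner)
    show ?thesis
      using c1 c2 c3 unfolding sq ip xc pc Ham_def Hbar_def by simp
  qed
  have dVx: "((\<lambda>t. Vx (W t)) has_real_derivative 2 * Vxp (W z)) (at z within I)" if z: "z \<in> I" for z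
  proof -
    have "((\<lambda>t. A t - (\<Sum>i\<in>UNIV. (X i t)\<^sup>2)) has_real_derivative
        2 * B z - (\<Sum>i\<in>UNIV. 2 * X i z * P i z)) (at z within I)"
    proof (intro DERIV_diff DERIV_sum)
      show "(A has_real_derivative 2 * B z) (at z within I)"
        using weak_xx z unfolding A_def B_def by auto
      fix i
      have "(X i has_real_derivative P i z) (at z within I)"
        using weak_x z unfolding X_def P_def by auto
      then show "((\<lambda>t. (X i t)\<^sup>2) has_real_derivative 2 * X i z * P i z) (at z within I)"
        by (auto intro!: derivative_eq_intros)
    qed
    moreover have "2 * B z - (\<Sum>i\<in>UNIV. 2 * X i z * P i z) = 2 * Vxp (W z)"
      using key[OF z] by (simp add: sum_distrib_left[symmetric] mult.assoc)
    ultimately have d: "((\<lambda>t. A t - (\<Sum>i\<in>UNIV. (X i t)\<^sup>2)) has_real_derivative 2 * Vxp (W z)) (at z within I)"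
      by simp
    show ?thesis
      by (rule has_field_derivative_transform_within[OF d zero_less_one z]) (use key in auto)
  qed
  define Hd where "Hd = Ham g \<sigma> (W 0) - Hbar (W 0)"
  define D where "D z = Vp (W z) + real CARD('d) * \<sigma> * Pot g \<sigma> (W z)" for z
  have bounds: "min (real CARD('d) * \<sigma>) 2 * Hd \<le> D z \<and> D z \<le> max (real CARD('d) * \<sigma>) 2 * Hd"
    if z: "z \<in> I" for z
  proof -
    have pos: "Pot g \<sigma> (W z) \<ge> 0"
    proof -
      have "(LINT x|lborel. (rho (W z) x) powr (\<sigma> + 1)) \<ge> 0"
        by (rule Bochner_Integration.integral_nonneg) simp
      moreover have "- g / (\<sigma> + 1) \<ge> 0" using g_neg sigma_pos by (simp add: divide_nonpos_pos)
      ultimately show ?thesis unfolding Pot_def by (simp only: mult_nonneg_nonneg)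
    qed
    have vp: "Vp (W z) = 2 * Hd - 2 * Pot g \<sigma> (W z)"
      using key[OF z] energy_law mean_ham_const z unfolding Hd_def by auto
    have lt: "Pot g \<sigma> (W z) < Hd" using Vp_pos z vp by auto
    define c where "c = real CARD('d) * \<sigma>"
    have De: "D z = 2 * Hd + (c - 2) * Pot g \<sigma> (W z)"
      unfolding D_def vp c_def by (simp add: algebra_simps)
    show ?thesis
    proof (cases "c \<le> 2")
      case True
      have "(c - 2) * (Pot g \<sigma> (W z) - Hd) \<ge> 0"
        using True lt by (intro mult_nonpos_nonpos) auto
      moreover have "(c - 2) * Pot g \<sigma> (W z) \<le> 0"
        using True pos by (intro mult_nonpos_nonneg) auto
      ultimately show ?thesis using True unfolding De c_def[symmetric]
        by (simp add: algebra_simps)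
    next
      case False
      have "(c - 2) * (Pot g \<sigma> (W z) - Hd) \<le> 0"
        using False lt by (intro mult_nonneg_nonpos) auto
      moreover have "(c - 2) * Pot g \<sigma> (W z) \<ge> 0"
        using False pos by (intro mult_nonneg_nonneg) auto
      ultimately show ?thesis using False unfolding De c_def[symmetric]
        by (simp add: algebra_simps)
    qed
  qed
  have dG: "\<forall>x\<in>I. ((\<lambda>t. Vxp (W t)) has_real_derivative D x) (at x within I)"
    using variance_identity unfolding D_def by auto
  show ?thesis
  proof
    fix z assume z: "z \<in> I"
    have lower: "Vx (W 0) + 2 * Vxp (W 0) * z + (min (real CARD('d) * \<sigma>) 2 * Hd) * z\<^sup>2 \<le> Vx (W z)"
      by (rule ode_lower[OF Ieq _ dG _ z zeroI, where F="\<lambda>t. Vx (W t)"])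
         (use dVx bounds in auto)
    have upper0: "- Vx (W 0) + 2 * (- Vxp (W 0)) * z + (- (max (real CARD('d) * \<sigma>) 2 * Hd)) * z\<^sup>2
        \<le> - Vx (W z)"
    proof (rule ode_lower[OF Ieq _ _ _ z zeroI, where F="\<lambda>t. - Vx (W t)" and G="\<lambda>t. - Vxp (W t)"
          and D="\<lambda>t. - D t"])
      show "\<forall>x\<in>I. ((\<lambda>t. - Vx (W t)) has_real_derivative 2 * - Vxp (W x)) (at x within I)"
        using dVx by (auto intro!: derivative_eq_intros)
      show "\<forall>x\<in>I. ((\<lambda>t. - Vxp (W t)) has_real_derivative - D x) (at x within I)"
        using dG by (auto intro!: derivative_eq_intros)
      show "\<forall>x\<in>I. - (max (real CARD('d) * \<sigma>) 2 * Hd) \<le> - D x"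
        using bounds by auto
    qed
    show "Vx (W 0) + 2 * Vxp (W 0) * z
       + min (real CARD('d) * \<sigma>) 2 * (Ham g \<sigma> (W 0) - Hbar (W 0)) * z\<^sup>2 \<le> Vx (W z)
     \<and> Vx (W z) \<le> Vx (W 0) + 2 * Vxp (W 0) * z
       + max (real CARD('d) * \<sigma>) 2 * (Ham g \<sigma> (W 0) - Hbar (W 0)) * z\<^sup>2"
      using lower upper0 unfolding Hd_def by (simp add: algebra_simps)
  qed
qed

end
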